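(* Let $\nu>-1$ and $p,q\in\mathbb{R}$. Then the inequalities $$(1-p)\mathcal{I}_{\nu+1}(x)+p\frac{\mathcal{I}_{\nu+1}(x)}{\mathcal{I}_{\nu}(x)}>1>(1-q)\mathcal{I}_{\nu+1}(x)+q\frac{\mathcal{I}_{\nu+1}(x)}{\mathcal{I}_{\nu}(x)}$$ hold for all $x\in(0,\infty)$ if and only if $p\leq\frac{\nu+1}{\nu+2}$ and $q\geq 1$.
   Context: For $\mu>-1$, $I_\mu(x)=\sum_{n\geq0}\frac{(x/2)^{\mu+2n}}{n!\,\Gamma(\mu+n+1)}$ is the modified Bessel function of the first kind, and $\mathcal{I}_\mu:\mathbb{R}\to[1,\infty)$ is the normalized modified Bessel function $$\mathcal{I}_{\mu}(x)=2^{\mu}\Gamma(\mu+1)x^{-\mu}I_{\mu}(x)=\sum_{n\geq0}\frac{(1/4)^n}{(\mu+1)_n\, n!}x^{2n},$$ where $(\mu+1)_n=\Gamma(\mu+n+1)/\Gamma(\mu+1)$ is the Pochhammer symbol. In particular $\mathcal{I}_{-1/2}(x)=\cosh x$ and $\mathcal{I}_{1/2}(x)=\frac{\sinh x}{x}$. *)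

theory Defs
  imports "HOL-Analysis.Analysis"
begin

text \<open>Normalized modified Bessel function of the first kind, via its power series:
  calI mu x = sum_{n>=0} (1/4)^n / ((mu+1)_n * n!) * x^(2n).\<close>
definition calI :: "real \<Rightarrow> real \<Rightarrow> real" where
  "calI \<mu> x = (\<Sum>n. (1/4) ^ n / (pochhammer (\<mu> + 1) n * fact n) * x ^ (2 * n))"

end

theory Submission
  imports Defs
begin

definition cf :: "real \<Rightarrow> nat \<Rightarrow> real" where
  "cf \<mu> n = (1/4) ^ n / (pochhammer (\<mu> + 1) n * fact n)"
definition P :: "real \<Rightarrow> real \<Rightarrow> real" where
  "P \<mu> y = (\<Sum>n. cf \<mu> n * y ^ n)"

lemma calI_P: "calI \<mu> x = P \<mu> (x^2)"
  unfolding calI_def P_def cf_def by (simp add: power_mult)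

lemma cf_pos: "\<mu> > -1 \<Longrightarrow> cf \<mu> n > 0"
  unfolding cf_def by (intro divide_pos_pos mult_pos_pos pochhammer_pos) auto

lemma cf_0[simp]: "cf \<mu> 0 = 1" unfolding cf_def by simp
lemma cf_1: "cf \<mu> 1 = 1 / (4 * (\<mu> + 1))" unfolding cf_def by simp

lemma cf_Suc: "\<mu> > -1 \<Longrightarrow> cf \<mu> (Suc n) = cf \<mu> n / (4 * (\<mu> + 1 + n) * (n + 1))"
  unfolding cf_def pochhammer_Suc by (simp add: field_simps)

lemma cf_shift: "\<mu> > -1 \<Longrightarrow> cf (\<mu> + 1) n * (\<mu> + 1 + n) = cf \<mu> n * (\<mu> + 1)"
proof -
  assume h: "\<mu> > -1"
  have e: "pochhammer (\<mu> + 1 + 1) n * (\<mu> + 1) = pochhammer (\<mu> + 1) n * (\<mu> + 1 + n)"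
    using pochhammer_rec[of "\<mu>+1" n] pochhammer_Suc[of "\<mu>+1" n] by (simp add: algebra_simps)
  hence e2: "pochhammer (\<mu> + 1 + 1) n = pochhammer (\<mu> + 1) n * (\<mu> + 1 + n) / (\<mu> + 1)"
    using h by (simp add: field_simps)
  have p1: "pochhammer (\<mu> + 1) n > 0"
    using h by (auto intro!: pochhammer_pos)
  have "\<mu> + 1 + n > 0" using h by simp
  have gen: "\<And>W Q F a b::real. Q > 0 \<Longrightarrow> F > 0 \<Longrightarrow> a > 0 \<Longrightarrow> b > 0 \<Longrightarrow>
     W / (Q * a / b * F) * a = W / (Q * F) * b" by (simp add: field_simps)
  show ?thesis unfolding cf_def e2
    by (rule gen) (use p1 h \<open>\<mu> + 1 + n > 0\<close> in auto)
qed

lemma cf_summable: assumes "\<mu> > -1" shows "summable (\<lambda>n. cf \<mu> n * y ^ n)"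
proof (rule summable_ratio_test[where c="1/2" and N="nat \<lceil>\<bar>y\<bar>\<rceil>"])
  fix n assume n: "nat \<lceil>\<bar>y\<bar>\<rceil> \<le> n"
  hence ny: "\<bar>y\<bar> \<le> real n" by linarith
  have c: "cf \<mu> n > 0" using cf_pos assms by blast
  define D where "D = 4 * (\<mu> + 1 + n) * (n + 1)"
  have d: "D > 0" using assms unfolding D_def by simp
  have "\<bar>y\<bar> \<le> (\<mu> + 1 + n) * 1" using ny assms by simp
  also have "\<dots> \<le> (\<mu> + 1 + n) * (n+1)" using assms by (intro mult_left_mono) auto
  finally have "\<bar>y\<bar> / D \<le> 1/2" using d unfolding D_def by (simp add: field_simps)
  hence "(cf \<mu> n * \<bar>y\<bar>^n) * (\<bar>y\<bar> / D) \<le> (cf \<mu> n * \<bar>y\<bar>^n) * (1/2)"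
    using c by (intro mult_left_mono) auto
  moreover have "norm (cf \<mu> (Suc n) * y ^ Suc n) = (cf \<mu> n * \<bar>y\<bar>^n) * (\<bar>y\<bar> / D)"
    unfolding cf_Suc[OF assms] D_def[symmetric] using c d
    by (simp add: abs_mult power_abs)
  moreover have "norm (cf \<mu> n * y ^ n) = cf \<mu> n * \<bar>y\<bar>^n" using c by (simp add: abs_mult power_abs)
  ultimately show "norm (cf \<mu> (Suc n) * y ^ Suc n) \<le> 1 / 2 * norm (cf \<mu> n * y ^ n)"
    by simp
qed simp

lemma P_sums: "\<mu> > -1 \<Longrightarrow> (\<lambda>n. cf \<mu> n * y ^ n) sums P \<mu> y"
  unfolding P_def by (rule summable_sums[OF cf_summable])

lemma first_le_sums: fixes f :: "nat \<Rightarrow> real" assumes "f sums s" "\<And>n. f n \<ge> 0" shows "f 0 + f 1 \<le> s"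
proof -
  have "sum f {..<2} \<le> suminf f"
    using sum_le_suminf[of f "{..<2}"] assms by (auto simp: sums_iff)
  thus ?thesis using assms(1) by (simp add: sums_iff eval_nat_numeral)
qed

lemma P_lower: assumes "\<mu> > -1" "y \<ge> 0" shows "1 + cf \<mu> 1 * y \<le> P \<mu> y"
proof -
  have "\<And>n. 0 \<le> cf \<mu> n * y^n" using cf_pos[OF assms(1)] assms(2) by (simp add: less_imp_le)
  thus ?thesis using first_le_sums[OF P_sums[OF assms(1), of y]] by simp
qed

lemma P_gt1: assumes "\<mu> > -1" "y > 0" shows "P \<mu> y > 1"
  using P_lower[of \<mu> y] cf_pos[OF assms(1), of 1] assms by (smt (verit) mult_pos_pos)

lemma main_ineq:
  assumes h: "\<nu> > -1" and y: "y > 0"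
  shows "(P (\<nu>+1) y - 1) * P \<nu> y > (\<nu>+1) * (P \<nu> y - P (\<nu>+1) y) \<and> P (\<nu>+1) y < P \<nu> y"
proof -
  define m where "m = \<nu> + 1"
  have m: "m > 0" using h m_def by simp
  define a where "a = cf (\<nu>+1)"
  define b where "b = cf \<nu>"
  define A where "A = P (\<nu>+1) y"
  define B where "B = P \<nu> y"
  have h1: "\<nu> + 1 > -1" using h by simp
  have apos: "\<And>n. a n > 0" unfolding a_def using cf_pos[OF h1] by blast
  have bpos: "\<And>n. b n > 0" unfolding b_def using cf_pos[OF h] by blast
  have a1: "a 1 = 1 / (4 * (m + 1))" unfolding a_def m_def cf_1 by simp
  have aSuc: "\<And>n. a (Suc n) = a n / (4 * (m + 1 + n) * (n + 1))"
    unfolding a_def m_def using cf_Suc[OF h1] by (simp add: algebra_simps)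
  have ab: "\<And>n. a n * (m + n) = b n * m"
    unfolding a_def b_def m_def using cf_shift[OF h] by simp
  have TA: "(\<lambda>n. a n * y ^ n) sums A" unfolding a_def A_def by (rule P_sums[OF h1])
  have UB: "(\<lambda>n. b n * y ^ n) sums B" unfolding b_def B_def by (rule P_sums[OF h])
  define D where "D = (A - 1) / y"
  define N where "N = m * (B - A) / y"
  have "(\<lambda>n. a (Suc n) * y ^ Suc n) sums (A - 1)"
    using TA sums_Suc_iff[of "\<lambda>n. a n * y ^ n" "A - 1"] unfolding a_def by simp
  from sums_mult[OF this, of "1/y"]
  have DS: "(\<lambda>n. a (Suc n) * y ^ n) sums D"
  proof -
    assume H: "(\<lambda>n. 1/y * (a (Suc n) * y ^ Suc n)) sums (1/y * (A - 1))"
    have "(\<lambda>n. 1/y * (a (Suc n) * y ^ Suc n)) = (\<lambda>n. a (Suc n) * y ^ n)" using y by (auto simp: fun_eq_iff)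
    thus ?thesis using H unfolding D_def by simp
  qed
  have V: "(\<lambda>n. m * (b n * y ^ n - a n * y ^ n)) sums (m * (B - A))"
    by (intro sums_mult sums_diff UB TA)
  have Veq: "\<And>n. m * (b n * y ^ n - a n * y ^ n) = n * a n * y ^ n"
  proof -
    fix n have "b n * m = a n * (m + n)" using ab[of n] by simp
    hence "b n * m * y^n = a n * (m + n) * y^n" by simp
    thus "m * (b n * y ^ n - a n * y ^ n) = n * a n * y ^ n" by (simp add: algebra_simps)
  qed
  have "(\<lambda>n. Suc n * a (Suc n) * y ^ Suc n) sums (m * (B - A))"
    using V sums_Suc_iff[of "\<lambda>n. n * a n * y ^ n" "m * (B - A)"] unfolding Veq by simp
  from sums_mult[OF this, of "1/y"]
  have NS: "(\<lambda>n. Suc n * a (Suc n) * y ^ n) sums N"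
  proof -
    assume H: "(\<lambda>n. 1/y * (Suc n * a (Suc n) * y ^ Suc n)) sums (1/y * (m * (B - A)))"
    have "(\<lambda>n. 1/y * (Suc n * a (Suc n) * y ^ Suc n)) = (\<lambda>n. Suc n * a (Suc n) * y ^ n)" using y by (auto simp: fun_eq_iff)
    thus ?thesis using H unfolding N_def by simp
  qed
  have nn1: "\<And>n. 0 \<le> a (Suc n) * y^n" using apos y by (simp add: less_imp_le)
  have nn2: "\<And>n. 0 \<le> Suc n * a (Suc n) * y^n" using apos y by (simp add: less_imp_le)
  have D1: "D \<ge> a 1"
    using first_le_sums[OF DS nn1] nn1[of 1] by simp
  have N1: "N \<ge> a 1"
    using first_le_sums[OF NS nn2] nn2[of 1] by (simp add: algebra_simps)
  have B1: "B \<ge> 1" using P_lower[OF h, of y] cf_pos[OF h, of 1] y unfolding B_def by (smt (verit) mult_pos_pos)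
  have SS: "(\<lambda>n. a 1 * (b n * y ^ n) + a (Suc n) * y ^ n - Suc n * a (Suc n) * y ^ n) sums (a 1 * B + D - N)"
    by (intro sums_mult sums_diff sums_add UB DS NS)
  have Spos: "\<And>n. a 1 * (b n * y ^ n) + a (Suc n) * y ^ n - Suc n * a (Suc n) * y ^ n > 0"
  proof -
    fix n
    have e: "a 1 * (b n * y ^ n) + a (Suc n) * y ^ n - Suc n * a (Suc n) * y ^ n
       = (a 1 * b n - n * a (Suc n)) * y ^ n" by (simp add: algebra_simps)
    have an: "a n = b n * m / (m + n)" using ab[of n] m by (simp add: field_simps)
    have poly: "n * m * (m + 1) < (m + n) * (m + 1 + n) * (n + 1)"
    proof -
      have q: "m*(m+1) \<le> (m+n)*(m+1+n)" using m by (intro mult_mono) auto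
      have "n*(m*(m+1)) \<le> n*((m+n)*(m+1+n))" by (intro mult_left_mono q) auto
      also have "\<dots> < (n+1)*((m+n)*(m+1+n))" using m by (intro mult_strict_right_mono) auto
      finally show ?thesis by (simp add: algebra_simps)
    qed
    have den: "(m+n)*(4*(m+1+n)*(n+1)) > 0" using m by simp
    have fr: "n*m/((m+n)*(4*(m+1+n)*(n+1))) < 1/(4*(m+1))"
      using poly den m by (simp add: divide_simps algebra_simps)
    have "n * a (Suc n) = b n * (n*m/((m+n)*(4*(m+1+n)*(n+1))))"
      unfolding aSuc an by simp
    also have "\<dots> < b n * (1/(4*(m+1)))" by (rule mult_strict_left_mono[OF fr bpos])
    finally have "n * a (Suc n) < a 1 * b n" unfolding a1 by simp
    thus "a 1 * (b n * y ^ n) + a (Suc n) * y ^ n - Suc n * a (Suc n) * y ^ n > 0"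
      unfolding e using y by simp
  qed
  have "a 1 * B + D - N \<ge> a 1 * (b 0 * y ^ 0) + a (Suc 0) * y ^ 0 - Suc 0 * a (Suc 0) * y ^ 0 +
      (a 1 * (b 1 * y ^ 1) + a (Suc 1) * y ^ 1 - Suc 1 * a (Suc 1) * y ^ 1)"
    using first_le_sums[OF SS] Spos less_imp_le by blast
  moreover have "(a 1 * (b 1 * y ^ 1) + a (Suc 1) * y ^ 1 - Suc 1 * a (Suc 1) * y ^ 1) > 0" by (rule Spos)
  ultimately have key: "a 1 * B + D - N > a 1" using bpos by (simp add: b_def)
  have "D * B = D + D * (B - 1)" by (simp add: algebra_simps)
  moreover have "D * (B - 1) \<ge> a 1 * (B - 1)" using D1 B1 by (intro mult_right_mono) auto
  ultimately have DBN: "D * B > N" using key by (simp add: algebra_simps)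
  have eA: "A - 1 = y * D" unfolding D_def using y by simp
  have eN: "m * (B - A) = y * N" unfolding N_def using y by simp
  have "(A - 1) * B > m * (B - A)" unfolding eA eN using DBN y by simp
  moreover have "A < B"
  proof -
    have "y * N > 0" using N1 apos[of 1] y by simp
    hence "m * (B - A) > 0" using eN by simp
    thus ?thesis using m by (simp add: zero_less_mult_iff)
  qed
  ultimately show ?thesis unfolding A_def B_def m_def by simp
qed

lemma P_tail:
  assumes h: "\<mu> > -1" and y: "0 \<le> y" "y \<le> 1"
  shows "P \<mu> y \<le> (\<Sum>i<k. cf \<mu> i * y^i) + y^k * (P \<mu> 1 - (\<Sum>i<k. cf \<mu> i))"
proof -
  define f where "f = (\<lambda>n. cf \<mu> n * y^n)"
  define g where "g = (\<lambda>n. cf \<mu> n)"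
  have sf: "summable f" unfolding f_def by (rule cf_summable[OF h])
  have sg: "summable g" unfolding g_def using cf_summable[OF h, of 1] by simp
  have Pf: "P \<mu> y = (\<Sum>n. f (n + k)) + sum f {..<k}"
    unfolding P_def f_def[symmetric] by (rule suminf_split_initial_segment[OF sf])
  have Pg: "P \<mu> 1 = (\<Sum>n. g (n + k)) + sum g {..<k}"
    unfolding P_def using suminf_split_initial_segment[OF sg, of k] by (simp add: g_def)
  have sfk: "summable (\<lambda>n. f (n + k))" using sf summable_iff_shift by blast
  have sgk: "summable (\<lambda>n. y^k * g (n + k))" using sg summable_iff_shift summable_mult by blast
  have le: "(\<Sum>n. f (n + k)) \<le> (\<Sum>n. y^k * g (n + k))"
  proof (rule suminf_le[OF _ sfk sgk])
    fix n
    have "y^n \<le> 1" using y by (simp add: power_le_one)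
    hence "y^k * y^n \<le> y^k * 1" using y by (intro mult_left_mono) auto
    hence "cf \<mu> (n+k) * (y^k * y^n) \<le> cf \<mu> (n+k) * y^k"
      using cf_pos[OF h, of "n+k"] by (intro mult_left_mono) auto
    thus "f (n + k) \<le> y^k * g (n + k)" unfolding f_def g_def by (simp add: power_add algebra_simps)
  qed
  also have "\<dots> = y^k * (\<Sum>n. g (n + k))" using suminf_mult sg summable_iff_shift by blast
  finally show ?thesis using Pf Pg unfolding f_def g_def by simp
qed

lemma P_up1: assumes "\<mu> > -1" "0 \<le> y" "y \<le> 1" shows "P \<mu> y \<le> 1 + y * (P \<mu> 1 - 1)"
  using P_tail[OF assms, of 1] by simp

lemma P_up2: assumes "\<mu> > -1" "0 \<le> y" "y \<le> 1"
  shows "P \<mu> y \<le> 1 + cf \<mu> 1 * y + y^2 * (P \<mu> 1 - 1 - cf \<mu> 1)"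
  using P_tail[OF assms, of 2] by (simp add: eval_nat_numeral algebra_simps)

lemma L_iff: "(B::real) > 0 \<Longrightarrow> ((1-p)*A + p*(A/B) > 1 \<longleftrightarrow> (A-1)*B > p*(A*(B-1)))"
  by (simp add: field_simps)

lemma R_iff: "(B::real) > 0 \<Longrightarrow> (1 > (1-q)*A + q*(A/B) \<longleftrightarrow> (A-1)*B < q*(A*(B-1)))"
  by (simp add: field_simps)

lemma facts_at:
  assumes h: "\<nu> > -1" and y: "y > 0"
  shows "P (\<nu>+1) y > 1" "P (\<nu>+1) y < P \<nu> y"
    "(P (\<nu>+1) y - 1) * P \<nu> y > (\<nu>+1) * (P \<nu> y - P (\<nu>+1) y)"
  using P_gt1[of "\<nu>+1" y] main_ineq[OF h y] h y by auto

theorem theorem4p1: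
  fixes \<nu> p q :: real
  assumes "\<nu> > -1"
  shows "(\<forall>x::real. x > 0 \<longrightarrow>
            (1 - p) * calI (\<nu> + 1) x + p * (calI (\<nu> + 1) x / calI \<nu> x) > 1 \<and>
            1 > (1 - q) * calI (\<nu> + 1) x + q * (calI (\<nu> + 1) x / calI \<nu> x))
         \<longleftrightarrow> (p \<le> (\<nu> + 1) / (\<nu> + 2) \<and> q \<ge> 1)"
proof -
  have h: "\<nu> > -1" by fact
  define m where "m = \<nu> + 1"
  have m: "m > 0" using h m_def by simp
  have eqv: "((1 - p) * calI (\<nu> + 1) x + p * (calI (\<nu> + 1) x / calI \<nu> x) > 1 \<and>
            1 > (1 - q) * calI (\<nu> + 1) x + q * (calI (\<nu> + 1) x / calI \<nu> x)) \<longleftrightarrow>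
       ((P (\<nu>+1) (x^2) - 1) * P \<nu> (x^2) > p * (P (\<nu>+1) (x^2) * (P \<nu> (x^2) - 1)) \<and>
        (P (\<nu>+1) (x^2) - 1) * P \<nu> (x^2) < q * (P (\<nu>+1) (x^2) * (P \<nu> (x^2) - 1)))"
    if x: "x > 0" for x
  proof -
    have "P (\<nu>+1) (x^2) > 1" "P (\<nu>+1) (x^2) < P \<nu> (x^2)" using facts_at[OF h, of "x^2"] x by auto
    hence "P \<nu> (x^2) > 0" by simp
    thus ?thesis unfolding calI_P using L_iff R_iff by blast
  qed
  show ?thesis
  proof
    assume H: "\<forall>x::real. x > 0 \<longrightarrow>
            (1 - p) * calI (\<nu> + 1) x + p * (calI (\<nu> + 1) x / calI \<nu> x) > 1 \<and>
            1 > (1 - q) * calI (\<nu> + 1) x + q * (calI (\<nu> + 1) x / calI \<nu> x)"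
    have H2: "(P (\<nu>+1) y - 1) * P \<nu> y > p * (P (\<nu>+1) y * (P \<nu> y - 1)) \<and>
        (P (\<nu>+1) y - 1) * P \<nu> y < q * (P (\<nu>+1) y * (P \<nu> y - 1))" if y: "y > 0" for y
    proof -
      have "sqrt y > 0" "(sqrt y)^2 = y" using y by auto
      thus ?thesis using H eqv[of "sqrt y"] by metis
    qed
    show "p \<le> (\<nu> + 1) / (\<nu> + 2) \<and> q \<ge> 1"
    proof
      show "q \<ge> 1"
      proof (rule ccontr)
        assume "\<not> q \<ge> 1" hence q1: "q < 1" by simp
        show False
        proof (cases "q \<le> 0")
          case True
          have A: "P (\<nu>+1) 1 > 1" "P (\<nu>+1) 1 < P \<nu> 1" using facts_at[OF h, of 1] by auto
          have "q * (P (\<nu>+1) 1 * (P \<nu> 1 - 1)) \<le> 0"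
            using True A by (intro mult_nonpos_nonneg) auto
          moreover have "(P (\<nu>+1) 1 - 1) * P \<nu> 1 > 0" using A by simp
          ultimately show False using H2[of 1] by simp
        next
          case False
          define c1 where "c1 = cf (\<nu>+1) 1"
          have c1: "c1 > 0" unfolding c1_def using cf_pos h by simp
          define y where "y = 1 / (c1 * (1 - q))"
          have y: "y > 0" unfolding y_def using c1 q1 by simp
          define A where "A = P (\<nu>+1) y"
          define B where "B = P \<nu> y"
          have AB: "A > 1" "A < B" using facts_at[OF h y] unfolding A_def B_def by auto
          have "A \<ge> 1 + c1 * y" using P_lower[of "\<nu>+1" y] h y unfolding A_def c1_def by simp
          also have "c1 * y = 1/(1-q)" unfolding y_def using c1 q1 by simp
          finally have "A \<ge> 1 + 1/(1-q)" .
          hence "(1-q) * A \<ge> (1-q) * (1 + 1/(1-q))" using q1 by (intro mult_left_mono) auto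
          moreover have "(1-q) * (1 + 1/(1-q)) = 2 - q" using q1 by (simp add: field_simps)
          ultimately have "(1-q)*A \<ge> 1" using q1 by linarith
          hence "B * ((1-q)*A - 1) \<ge> 0" using AB by simp
          moreover have "q * A \<ge> 0" using False AB by simp
          ultimately have "(A-1)*B \<ge> q*(A*(B-1))" by (simp add: algebra_simps)
          thus False using H2[OF y] unfolding A_def B_def by simp
        qed
      qed
    next
      show "p \<le> (\<nu> + 1) / (\<nu> + 2)"
      proof (rule ccontr)
        assume "\<not> p \<le> (\<nu> + 1) / (\<nu> + 2)"
        hence pp: "p > (\<nu> + 1) / (\<nu> + 2)" by simp
        define c1 where "c1 = cf (\<nu>+1) 1"
        define d1 where "d1 = cf \<nu> 1"
        have c1e: "c1 = 1 / (4*(\<nu>+2))" unfolding c1_def cf_1 by simp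
        have d1e: "d1 = 1 / (4*(\<nu>+1))" unfolding d1_def cf_1 by simp
        have p0: "p > 0" using pp h by (smt (verit) divide_pos_pos)
        have d1p: "d1 > 0" using d1e h by simp
        have "p * d1 > ((\<nu> + 1) / (\<nu> + 2)) * d1" using pp d1p by (rule mult_strict_right_mono)
        moreover have "((\<nu> + 1) / (\<nu> + 2)) * d1 = c1" unfolding c1e d1e
        proof -
          have gen: "u/(u+1)*(1/(4*u)) = 1/(4*(u+1))" if "u > 0" for u :: real
          proof -
            have "u/(u+1)*(1/(4*u)) = u / (u * (4*(u+1)))" by (simp add: algebra_simps)
            also have "\<dots> = 1/(4*(u+1))" using that by simp
            finally show ?thesis .
          qed
          have "\<nu> + 2 = (\<nu> + 1) + 1" by simp
          thus "(\<nu> + 1) / (\<nu> + 2) * (1 / (4 * (\<nu> + 1))) = 1 / (4 * (\<nu> + 2))"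
            by (subst \<open>\<nu> + 2 = (\<nu> + 1) + 1\<close>)+ (rule gen, use h in simp)
        qed
        ultimately have pd: "p * d1 > c1" by simp
        define \<delta> where "\<delta> = p * d1 - c1"
        have \<delta>: "\<delta> > 0" using pd \<delta>_def by simp
        define E where "E = P (\<nu>+1) 1 - 1 - c1"
        define K where "K = P \<nu> 1 - 1"
        have E: "E \<ge> 0" using P_lower[of "\<nu>+1" 1] h unfolding E_def c1_def by simp
        have c1p: "c1 > 0" using c1e h by simp
        have K: "K \<ge> 0" using P_lower[of "\<nu>" 1] h d1p unfolding K_def d1_def by simp
        define M where "M = E + K * c1 + K * E"
        have M: "M \<ge> 0" unfolding M_def using E K c1p by simp
        define y where "y = min 1 (\<delta> / (M + 1))"
        have y: "y > 0" "y \<le> 1" "y \<le> \<delta> / (M + 1)" unfolding y_def using \<delta> M by auto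
        define A where "A = P (\<nu>+1) y"
        define B where "B = P \<nu> y"
        have AB: "A > 1" "A < B" using facts_at[OF h y(1)] unfolding A_def B_def by auto
        have Aup: "A - 1 \<le> c1 * y + y^2 * E"
          using P_up2[of "\<nu>+1" y] h y unfolding A_def c1_def E_def by simp
        have Bup: "B \<le> 1 + y * K" using P_up1[of \<nu> y] h y unfolding B_def K_def by simp
        have Blo: "B - 1 \<ge> d1 * y" using P_lower[of \<nu> y] h y unfolding B_def d1_def by simp
        have "(A-1) * B \<le> (c1 * y + y^2 * E) * (1 + y * K)"
          using Aup Bup AB by (intro mult_mono) auto
        also have "\<dots> = y * (c1 + y * (E + K * c1 + y * K * E))" by (simp add: algebra_simps power2_eq_square)
        also have "\<dots> \<le> y * (c1 + y * M)"
        proof -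
          have "y * K * E \<le> 1 * K * E" using y K E by (intro mult_right_mono) auto
          hence "E + K * c1 + y * K * E \<le> M" unfolding M_def by simp
          hence "y * (E + K * c1 + y * K * E) \<le> y * M" using y by (intro mult_left_mono) auto
          thus ?thesis using y by (intro mult_left_mono) auto
        qed
        also have "\<dots> \<le> y * (c1 + \<delta>)"
        proof -
          have "y * M \<le> \<delta> / (M + 1) * M" using y M by (intro mult_right_mono) auto
          also have "\<dots> \<le> \<delta>" using M \<delta> by (simp add: field_simps)
          finally show ?thesis using y by (intro mult_left_mono) auto
        qed
        also have "\<dots> = p * (d1 * y)" unfolding \<delta>_def by (simp add: algebra_simps)
        also have "\<dots> \<le> p * (B - 1)" using Blo p0 by (intro mult_left_mono) auto
        also have "\<dots> \<le> p * (A * (B - 1))"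
        proof -
          have "1 * (B - 1) \<le> A * (B - 1)" using AB by (intro mult_right_mono) auto
          thus ?thesis using p0 by (intro mult_left_mono) auto
        qed
        finally have "(A-1) * B \<le> p * (A * (B - 1))" .
        thus False using H2[OF y(1)] unfolding A_def B_def by simp
      qed
    qed
  next
    assume C: "p \<le> (\<nu> + 1) / (\<nu> + 2) \<and> q \<ge> 1"
    show "\<forall>x::real. x > 0 \<longrightarrow>
            (1 - p) * calI (\<nu> + 1) x + p * (calI (\<nu> + 1) x / calI \<nu> x) > 1 \<and>
            1 > (1 - q) * calI (\<nu> + 1) x + q * (calI (\<nu> + 1) x / calI \<nu> x)"
    proof (intro allI impI)
      fix x :: real assume x: "x > 0"
      define A where "A = P (\<nu>+1) (x^2)"
      define B where "B = P \<nu> (x^2)"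
      have AB: "A > 1" "A < B" "(A - 1) * B > m * (B - A)"
        using facts_at[OF h, of "x^2"] x unfolding A_def B_def m_def by auto
      define X where "X = A * (B - 1)"
      have X: "X > 0" unfolding X_def using AB by simp
      have "p * X \<le> (m / (m+1)) * X" using C X unfolding m_def by (intro mult_right_mono) (auto simp: add.assoc)
      also have "(m / (m+1)) * X < (A - 1) * B"
      proof -
        have "(m+1)*((A-1)*B) - m * X = (A-1)*B - m*(B-A)" unfolding X_def by (simp add: algebra_simps)
        hence "m * X < (m+1)*((A-1)*B)" using AB by simp
        thus ?thesis using m by (simp add: field_simps)
      qed
      finally have L: "(A - 1) * B > p * X" .
      have "(A - 1) * B < X" unfolding X_def using AB by (simp add: algebra_simps)
      also have "X \<le> q * X" using C X by simp
      finally have R: "(A - 1) * B < q * X" .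
      show "(1 - p) * calI (\<nu> + 1) x + p * (calI (\<nu> + 1) x / calI \<nu> x) > 1 \<and>
            1 > (1 - q) * calI (\<nu> + 1) x + q * (calI (\<nu> + 1) x / calI \<nu> x)"
        using eqv[OF x] L R unfolding A_def B_def X_def by simp
    qed
  qed
qed

end
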